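(* In the setting described in the context, suppose $(g\circ h^a)_\sharp\mu=\mu$ for some $a>0$, and that $\int F\,d\mu$ is finite and nonzero. Then the structure functions have power-law scaling $S_p(k_n)\propto k_n^{-\zeta_p}$ (i.e. $S_p(k_n)=c\,k_n^{-\zeta_p}$ with a constant $c\neq0$ independent of $n$) with exponent $$\zeta_p=(1-\log_2a)\,p.$$
   Context: Let $(\mathcal{X},\Sigma)$ be a measurable space, $\Phi^t$ a flow on $\mathcal{X}$ (bijective measurable maps, $\Phi^{t_1}\circ\Phi^{t_2}=\Phi^{t_1+t_2}$, jointly measurable), $f_\sharp$ push-forward, and $\mu$ a probability measure with $\Phi^t_\sharp\mu=\mu$ for all $t$. Let $h^a$, $a>0$, be bijective measurable maps of $\mathcal{X}$ and $\mathcal{G}$ a group of bijective measurable maps with $h^{a_1}\circ h^{a_2}=h^{a_1a_2}$, $\Phi^t\circ g=g\circ\Phi^t$, $g\circ h^a=h^a\circ g$, $\Phi^t\circ h^a=h^a\circ\Phi^{t/a}$. Fix $g\in\mathcal{G}$ and $p\in\mathbb{R}$, and a measurable $F:\mathcal{X}\to\mathbb{R}$ with $F\circ h^a=F/a^p$ for all $a>0$. For integers $n\ge0$ let $k_n=2^n$ and define the generalized structure function $S_p(k_n)=k_n^{-p}\int F\circ g^n\,d\mu$. *)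

theory Defs
  imports "HOL-Analysis.Analysis" "HOL-Probability.Probability"
begin

text \<open>Generalized structure function S_p(k_n) = k_n^(-p) * integral of F o g^n, with k_n = 2^n.\<close>
definition structure_fun ::
  "'a measure \<Rightarrow> ('a \<Rightarrow> real) \<Rightarrow> ('a \<Rightarrow> 'a) \<Rightarrow> real \<Rightarrow> nat \<Rightarrow> real" where
  "structure_fun \<mu> F g p n = (2 ^ n :: real) powr (- p) * integral\<^sup>L \<mu> (\<lambda>x. F ((g ^^ n) x))"

end

theory Submission
  imports Defs
begin

theorem proposition5:
  fixes \<mu> :: "'a measure"
    and \<Phi> :: "real \<Rightarrow> 'a \<Rightarrow> 'a"
    and h :: "real \<Rightarrow> 'a \<Rightarrow> 'a"
    and \<G> :: "('a \<Rightarrow> 'a) set"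
    and g :: "'a \<Rightarrow> 'a"
    and F :: "'a \<Rightarrow> real"
    and p a :: real
  assumes prob: "prob_space \<mu>"
    and flow_bij: "\<And>t. bij_betw (\<Phi> t) (space \<mu>) (space \<mu>)"
    and flow_meas: "\<And>t. \<Phi> t \<in> \<mu> \<rightarrow>\<^sub>M \<mu>"
    and flow_comp: "\<And>t1 t2 x. x \<in> space \<mu> \<Longrightarrow> \<Phi> t1 (\<Phi> t2 x) = \<Phi> (t1 + t2) x"
    and flow_joint: "(\<lambda>(t, x). \<Phi> t x) \<in> (borel \<Otimes>\<^sub>M \<mu>) \<rightarrow>\<^sub>M \<mu>"
    and flow_inv: "\<And>t. distr \<mu> \<mu> (\<Phi> t) = \<mu>"
    and h_bij: "\<And>b. b > 0 \<Longrightarrow> bij_betw (h b) (space \<mu>) (space \<mu>)"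
    and h_meas: "\<And>b. b > 0 \<Longrightarrow> h b \<in> \<mu> \<rightarrow>\<^sub>M \<mu>"
    and h_comp: "\<And>b1 b2 x. b1 > 0 \<Longrightarrow> b2 > 0 \<Longrightarrow> x \<in> space \<mu> \<Longrightarrow>
                   h b1 (h b2 x) = h (b1 * b2) x"
    and G_bij: "\<And>f. f \<in> \<G> \<Longrightarrow> bij_betw f (space \<mu>) (space \<mu>)"
    and G_meas: "\<And>f. f \<in> \<G> \<Longrightarrow> f \<in> \<mu> \<rightarrow>\<^sub>M \<mu>"
    and G_id: "id \<in> \<G>"
    and G_comp: "\<And>f1 f2. f1 \<in> \<G> \<Longrightarrow> f2 \<in> \<G> \<Longrightarrow> f1 \<circ> f2 \<in> \<G>"
    and G_inv: "\<And>f. f \<in> \<G> \<Longrightarrow> \<exists>f'\<in>\<G>. \<forall>x\<in>space \<mu>. f' (f x) = x \<and> f (f' x) = x"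
    and G_flow: "\<And>f t x. f \<in> \<G> \<Longrightarrow> x \<in> space \<mu> \<Longrightarrow> \<Phi> t (f x) = f (\<Phi> t x)"
    and G_h: "\<And>f b x. f \<in> \<G> \<Longrightarrow> b > 0 \<Longrightarrow> x \<in> space \<mu> \<Longrightarrow> f (h b x) = h b (f x)"
    and flow_h: "\<And>t b x. b > 0 \<Longrightarrow> x \<in> space \<mu> \<Longrightarrow> \<Phi> t (h b x) = h b (\<Phi> (t / b) x)"
    and g_in: "g \<in> \<G>"
    and F_meas: "F \<in> borel_measurable \<mu>"
    and F_scal: "\<And>b x. b > 0 \<Longrightarrow> x \<in> space \<mu> \<Longrightarrow> F (h b x) = F x / b powr p"
    and a_pos: "a > 0"
    and inv_gh: "distr \<mu> \<mu> (g \<circ> h a) = \<mu>"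
    and F_int: "integrable \<mu> F"
    and F_nz: "integral\<^sup>L \<mu> F \<noteq> 0"
  shows "\<exists>c. c \<noteq> 0 \<and>
           (\<forall>n. structure_fun \<mu> F g p n = c * (2 ^ n :: real) powr (- ((1 - log 2 a) * p)))"
proof -
  interpret P: prob_space \<mu> by (rule prob)
  define T where "T = g \<circ> h a"
  have gsp: "\<And>x. x \<in> space \<mu> \<Longrightarrow> g x \<in> space \<mu>"
    using G_meas[OF g_in] by (simp add: measurable_space)
  have hsp: "\<And>x. x \<in> space \<mu> \<Longrightarrow> h a x \<in> space \<mu>"
    using h_meas[OF a_pos] by (simp add: measurable_space)
  have gn_meas: "\<And>n. (g ^^ n) \<in> \<mu> \<rightarrow>\<^sub>M \<mu>"
    using G_meas[OF g_in] by (rule measurable_compose_n)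
  have T_meas: "T \<in> \<mu> \<rightarrow>\<^sub>M \<mu>"
    unfolding T_def using G_meas[OF g_in] h_meas[OF a_pos] by (rule measurable_comp[rotated])
  have Tn_meas: "\<And>n. (T ^^ n) \<in> \<mu> \<rightarrow>\<^sub>M \<mu>"
    using T_meas by (rule measurable_compose_n)
  have gnsp: "\<And>n x. x \<in> space \<mu> \<Longrightarrow> (g ^^ n) x \<in> space \<mu>"
    by (rule measurable_space[OF gn_meas])
  have Tsp: "\<And>x. x \<in> space \<mu> \<Longrightarrow> T x \<in> space \<mu>"
    unfolding T_def using gsp hsp by simp
  have comm: "\<And>n x. x \<in> space \<mu> \<Longrightarrow> (g ^^ n) (h a x) = h a ((g ^^ n) x)"
  proof -
    fix n x assume x: "x \<in> space \<mu>"
    show "(g ^^ n) (h a x) = h a ((g ^^ n) x)"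
      by (induction n) (simp_all add: G_h[OF g_in a_pos] gnsp x)
  qed
  have Fstep: "\<And>n x. x \<in> space \<mu> \<Longrightarrow> F ((T ^^ n) x) = F ((g ^^ n) x) / a powr (real n * p)"
  proof -
    fix n show "\<And>x. x \<in> space \<mu> \<Longrightarrow> F ((T ^^ n) x) = F ((g ^^ n) x) / a powr (real n * p)"
    proof (induction n)
      case 0 then show ?case using a_pos by simp
    next
      case (Suc n)
      have "(T ^^ Suc n) x = (T ^^ n) (T x)" by (simp add: funpow_Suc_right del: funpow.simps)
      then have "F ((T ^^ Suc n) x) = F ((g ^^ n) (T x)) / a powr (real n * p)"
        using Suc.IH[OF Tsp[OF Suc.prems]] by simp
      also have "(g ^^ n) (T x) = (g ^^ Suc n) (h a x)"
        by (simp add: T_def funpow_Suc_right del: funpow.simps)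
      also have "\<dots> = h a ((g ^^ Suc n) x)" using comm Suc.prems by blast
      also have "F (h a ((g ^^ Suc n) x)) = F ((g ^^ Suc n) x) / a powr p"
        using F_scal[OF a_pos gnsp[OF Suc.prems]] .
      finally show ?case using a_pos
        by (simp add: powr_add[symmetric] algebra_simps)
    qed
  qed
  have distrT: "\<And>n. distr \<mu> \<mu> (T ^^ n) = \<mu>"
  proof -
    fix n show "distr \<mu> \<mu> (T ^^ n) = \<mu>"
    proof (induction n)
      case 0 then show ?case by (simp add: distr_id2)
    next
      case (Suc n)
      have "distr \<mu> \<mu> (T ^^ Suc n) = distr \<mu> \<mu> ((T ^^ n) \<circ> T)"
        by (simp add: funpow_Suc_right del: funpow.simps)
      also have "\<dots> = distr (distr \<mu> \<mu> T) \<mu> (T ^^ n)"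
        using distr_distr[OF Tn_meas T_meas] by simp
      also have "\<dots> = \<mu>" using inv_gh Suc.IH unfolding T_def[symmetric] by (simp only:)
      finally show ?case .
    qed
  qed
  define I where "I = integral\<^sup>L \<mu> F"
  have key: "\<And>n. integral\<^sup>L \<mu> (\<lambda>x. F ((g ^^ n) x)) = I * a powr (real n * p)"
  proof -
    fix n
    have "I = integral\<^sup>L (distr \<mu> \<mu> (T ^^ n)) F" using distrT I_def by simp
    also have "\<dots> = integral\<^sup>L \<mu> (\<lambda>x. F ((T ^^ n) x))"
      by (rule integral_distr[OF Tn_meas]) (use F_meas in simp)
    also have "\<dots> = integral\<^sup>L \<mu> (\<lambda>x. F ((g ^^ n) x) / a powr (real n * p))"
      by (rule Bochner_Integration.integral_cong) (simp_all add: Fstep)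
    also have "\<dots> = integral\<^sup>L \<mu> (\<lambda>x. F ((g ^^ n) x)) / a powr (real n * p)"
      by simp
    finally show "integral\<^sup>L \<mu> (\<lambda>x. F ((g ^^ n) x)) = I * a powr (real n * p)"
      using a_pos by (simp add: field_simps)
  qed
  show ?thesis
  proof (intro exI conjI allI)
    show "I \<noteq> 0" using F_nz I_def by simp
  next
    fix n
    have p2: "(2 ^ n :: real) = 2 powr real n" by (simp add: powr_realpow)
    have e1: "(2 ^ n :: real) powr (- p) = 2 powr (- (real n * p))"
      unfolding p2 powr_powr by simp
    have e2: "(2 ^ n :: real) powr (- ((1 - log 2 a) * p)) = 2 powr (- (real n * p)) * a powr (real n * p)"
    proof -
      have "(2 ^ n :: real) powr (- ((1 - log 2 a) * p)) = 2 powr (- (real n * p) + log 2 a * (real n * p))"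
        unfolding p2 powr_powr by (simp add: algebra_simps)
      also have "\<dots> = 2 powr (- (real n * p)) * (2 powr log 2 a) powr (real n * p)"
        unfolding powr_add powr_powr by simp
      also have "2 powr log 2 a = a" using a_pos by simp
      finally show ?thesis .
    qed
    show "structure_fun \<mu> F g p n = I * (2 ^ n :: real) powr (- ((1 - log 2 a) * p))"
      unfolding structure_fun_def key e1 e2 by simp
  qed
qed

end
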